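(* Let $\Gamma$ be a competitive population network game, $\beta>0$, $\lambda\ge0$. Then the belief dynamics of homogeneous systems, $$\frac{d\mu_{is}}{dt}=\frac{f_{i,s}(\{\boldsymbol{\mu}_j\}_{j\in V_i})-\mu_{is}}{\lambda+t+1},\qquad i\in V,\ s\in S_i,\ t\ge0,$$ on $\prod_{i\in V}\Delta_i$ converges to a unique QRE $\mathbf{x}^\ast$ of $\Gamma$: $\Gamma$ has exactly one QRE, every solution with $\boldsymbol{\mu}(0)\in\prod_{i\in V}\Delta_i$ satisfies $\boldsymbol{\mu}(t)\to\mathbf{x}^\ast$ as $t\to\infty$, and $\mathbf{x}^\ast$ is globally asymptotically stable.
   Context: A population network game $\Gamma$ consists of a finite undirected graph with vertex set $V=\{1,\dots,n\}$ (populations) and edge set $E$; $V_i=\{j:\{i,j\}\in E\}$. Population $i$ has finite strategy set $S_i$, $\Delta_i\subset\mathbb{R}^{|S_i|}$ is the probability simplex, and each edge $\{i,j\}$ carries payoff matrices $\mathbf{A}_{ij}\in\mathbb{R}^{|S_i|\times|S_j|}$, $\mathbf{A}_{ji}\in\mathbb{R}^{|S_j|\times|S_i|}$. For $\mathbf{x}=(\mathbf{x}_i)_{i\in V}\in\prod_i\Delta_i$, $r_i(\mathbf{x})=\sum_{j\in V_i}\mathbf{x}_i^\top\mathbf{A}_{ij}\mathbf{x}_j$. $\Gamma$ is competitive (weighted zero-sum) if there are constants $\omega_i>0$ with $\sum_{i\in V}\omega_i r_i(\mathbf{x})=0$ for all $\mathbf{x}\in\prod_{i\in V}\Delta_i$.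 The logit choice function is $f_{i,s}(\{\boldsymbol{\mu}_j\}_{j\in V_i})=\exp\big(\beta\sum_{j\in V_i}\mathbf{e}_s^\top\mathbf{A}_{ij}\boldsymbol{\mu}_j\big)/\sum_{s'\in S_i}\exp\big(\beta\sum_{j\in V_i}\mathbf{e}_{s'}^\top\mathbf{A}_{ij}\boldsymbol{\mu}_j\big)$, $\mathbf{e}_s$ the $s$-th unit vector. A QRE is $\mathbf{x}^\ast\in\prod_i\Delta_i$ with $x^\ast_{is}=f_{i,s}(\{\mathbf{x}^\ast_j\}_{j\in V_i})$ for all $i,s$. *)

theory Defs
  imports "HOL-Analysis.Analysis"
begin

text \<open>Populations are 0,...,n-1; population i has strategies 0,...,m i - 1.
  The graph is a symmetric irreflexive relation E; A i j s s' is the (s,s') entry of A_ij.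
  A state x assigns x i s to population i and strategy s.\<close>

definition network_graph :: "(nat \<Rightarrow> nat \<Rightarrow> bool) \<Rightarrow> bool" where
  "network_graph E \<longleftrightarrow> (\<forall>i j. E i j \<longrightarrow> E j i) \<and> (\<forall>i. \<not> E i i)"

definition neighbors :: "nat \<Rightarrow> (nat \<Rightarrow> nat \<Rightarrow> bool) \<Rightarrow> nat \<Rightarrow> nat set" where
  "neighbors n E i = {j. j < n \<and> E i j}"

text \<open>Product of simplices; coordinates outside the index ranges are fixed to 0.\<close>
definition simplex_prod :: "nat \<Rightarrow> (nat \<Rightarrow> nat) \<Rightarrow> (nat \<Rightarrow> nat \<Rightarrow> real) set" where
  "simplex_prod n m = {x. (\<forall>i<n. (\<forall>s<m i. 0 \<le> x i s) \<and> (\<Sum>s<m i. x i s) = 1)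
                          \<and> (\<forall>i s. (n \<le> i \<or> m i \<le> s) \<longrightarrow> x i s = 0)}"

definition payoff :: "nat \<Rightarrow> (nat \<Rightarrow> nat) \<Rightarrow> (nat \<Rightarrow> nat \<Rightarrow> bool)
    \<Rightarrow> (nat \<Rightarrow> nat \<Rightarrow> nat \<Rightarrow> nat \<Rightarrow> real) \<Rightarrow> nat \<Rightarrow> (nat \<Rightarrow> nat \<Rightarrow> real) \<Rightarrow> real" where
  "payoff n m E A i x =
     (\<Sum>j\<in>neighbors n E i. \<Sum>s<m i. \<Sum>s'<m j. x i s * A i j s s' * x j s')"

definition competitive :: "nat \<Rightarrow> (nat \<Rightarrow> nat) \<Rightarrow> (nat \<Rightarrow> nat \<Rightarrow> bool)
    \<Rightarrow> (nat \<Rightarrow> nat \<Rightarrow> nat \<Rightarrow> nat \<Rightarrow> real) \<Rightarrow> bool" where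
  "competitive n m E A \<longleftrightarrow> (\<exists>\<omega> :: nat \<Rightarrow> real. (\<forall>i<n. 0 < \<omega> i) \<and>
      (\<forall>x\<in>simplex_prod n m. (\<Sum>i<n. \<omega> i * payoff n m E A i x) = 0))"

definition util :: "nat \<Rightarrow> (nat \<Rightarrow> nat) \<Rightarrow> (nat \<Rightarrow> nat \<Rightarrow> bool)
    \<Rightarrow> (nat \<Rightarrow> nat \<Rightarrow> nat \<Rightarrow> nat \<Rightarrow> real) \<Rightarrow> nat \<Rightarrow> nat \<Rightarrow> (nat \<Rightarrow> nat \<Rightarrow> real) \<Rightarrow> real" where
  "util n m E A i s \<mu> = (\<Sum>j\<in>neighbors n E i. \<Sum>s'<m j. A i j s s' * \<mu> j s')"

definition logit :: "nat \<Rightarrow> (nat \<Rightarrow> nat) \<Rightarrow> (nat \<Rightarrow> nat \<Rightarrow> bool)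
    \<Rightarrow> (nat \<Rightarrow> nat \<Rightarrow> nat \<Rightarrow> nat \<Rightarrow> real) \<Rightarrow> real \<Rightarrow> nat \<Rightarrow> nat \<Rightarrow> (nat \<Rightarrow> nat \<Rightarrow> real) \<Rightarrow> real" where
  "logit n m E A \<beta> i s \<mu> =
     exp (\<beta> * util n m E A i s \<mu>) / (\<Sum>s'<m i. exp (\<beta> * util n m E A i s' \<mu>))"

definition is_QRE :: "nat \<Rightarrow> (nat \<Rightarrow> nat) \<Rightarrow> (nat \<Rightarrow> nat \<Rightarrow> bool)
    \<Rightarrow> (nat \<Rightarrow> nat \<Rightarrow> nat \<Rightarrow> nat \<Rightarrow> real) \<Rightarrow> real \<Rightarrow> (nat \<Rightarrow> nat \<Rightarrow> real) \<Rightarrow> bool" where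
  "is_QRE n m E A \<beta> x \<longleftrightarrow> x \<in> simplex_prod n m \<and>
     (\<forall>i<n. \<forall>s<m i. x i s = logit n m E A \<beta> i s x)"

definition belief_solution :: "nat \<Rightarrow> (nat \<Rightarrow> nat) \<Rightarrow> (nat \<Rightarrow> nat \<Rightarrow> bool)
    \<Rightarrow> (nat \<Rightarrow> nat \<Rightarrow> nat \<Rightarrow> nat \<Rightarrow> real) \<Rightarrow> real \<Rightarrow> real \<Rightarrow> (real \<Rightarrow> nat \<Rightarrow> nat \<Rightarrow> real) \<Rightarrow> bool" where
  "belief_solution n m E A \<beta> lam \<mu> \<longleftrightarrow>
     (\<forall>t\<ge>0. \<forall>i<n. \<forall>s<m i.
        ((\<lambda>\<tau>. \<mu> \<tau> i s) has_real_derivative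
           (logit n m E A \<beta> i s (\<mu> t) - \<mu> t i s) / (lam + t + 1)) (at t within {0..}))"

definition state_dist :: "nat \<Rightarrow> (nat \<Rightarrow> nat) \<Rightarrow> (nat \<Rightarrow> nat \<Rightarrow> real) \<Rightarrow> (nat \<Rightarrow> nat \<Rightarrow> real) \<Rightarrow> real" where
  "state_dist n m x y = (\<Sum>i<n. \<Sum>s<m i. \<bar>x i s - y i s\<bar>)"

end

theory Submission
  imports Defs
begin

lemma ineq_low:
  fixes x q :: real
  assumes "0 \<le> x" "x \<le> 1" "0 < q" "q \<le> 1"
  shows "(x - q)^2/4 \<le> x * (ln x - ln q) + q - x"
proof (cases "x = 0")
  case True thus ?thesis using assms by (simp add: power2_eq_square mult_le_cancel_left1)
next
  case False
  define a where "a = sqrt x"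
  define b where "b = sqrt q"
  have a: "0 < a" "a \<le> 1" "x = a^2" using assms False by (auto simp: a_def)
  have b: "0 < b" "b \<le> 1" "q = b^2" using assms by (auto simp: b_def)
  have lnx: "ln x = 2 * ln a" using a by (simp add: ln_realpow)
  have lnq: "ln q = 2 * ln b" using b by (simp add: ln_realpow)
  have "ln (b/a) \<le> b/a - 1" using a b by (intro ln_le_minus_one) auto
  hence "ln b - ln a \<le> b/a - 1" using a b by (simp add: ln_div)
  hence "a * (ln b - ln a) \<le> a * (b/a - 1)" using a by (intro mult_left_mono) auto
  moreover have "a * (b/a - 1) = b - a" using a by (simp add: field_simps)
  ultimately have "a * (ln b - ln a) \<le> b - a" by simp
  hence "a^2 * (ln b - ln a) \<le> a * (b - a)" using a
    by (metis mult_left_mono less_imp_le power2_eq_square mult.assoc)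
  hence 1: "x * (ln x - ln q) + q - x \<ge> (a - b)^2"
    using a b lnx lnq by (simp add: algebra_simps power2_eq_square)
  have "(x - q)^2 = (a - b)^2 * (a + b)^2" using a b by (simp add: algebra_simps power2_eq_square)
  also have "\<dots> \<le> (a - b)^2 * 4"
  proof (intro mult_left_mono)
    have "(a + b)^2 \<le> 2^2" using a b by (intro power_mono) auto
    thus "(a + b)^2 \<le> 4" by simp
  qed simp
  finally show ?thesis using 1 by simp
qed

lemma ineq_up:
  fixes x q :: real
  assumes "0 \<le> x" "0 < q"
  shows "x * (ln x - ln q) \<le> (x - q)^2/q + x - q"
proof (cases "x = 0")
  case True thus ?thesis using assms by (simp add: power2_eq_square)
next
  case False
  hence x: "0 < x" using assms by simp
  have "ln (x/q) \<le> x/q - 1" using x assms by (intro ln_le_minus_one) auto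
  hence "ln x - ln q \<le> x/q - 1" using x assms by (simp add: ln_div)
  hence "x * (ln x - ln q) \<le> x * (x/q - 1)" using x by (intro mult_left_mono) auto
  also have "\<dots> = (x - q)^2/q + x - q" using assms by (simp add: field_simps power2_eq_square)
  finally show ?thesis .
qed

lemma ineq_W1:
  fixes a b :: real
  assumes "0 < a" "a \<le> 1" "0 < b" "b \<le> a"
  shows "(a - b)^2 \<le> (a - b) * (ln a - ln b)"
proof -
  have "ln (b/a) \<le> b/a - 1" using assms by (intro ln_le_minus_one) auto
  hence "ln b - ln a \<le> b/a - 1" using assms by (simp add: ln_div)
  hence "(a - b)/a \<le> ln a - ln b" using assms by (simp add: field_simps)
  moreover have "(a - b) * 1 \<le> (a - b) * (1/a)" using assms by (intro mult_left_mono) auto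
  hence "a - b \<le> (a - b)/a" by simp
  ultimately have "a - b \<le> ln a - ln b" by linarith
  thus ?thesis using assms by (simp add: power2_eq_square mult_left_mono)
qed

lemma ineq_W:
  fixes a b :: real
  assumes "0 < a" "a \<le> 1" "0 < b" "b \<le> 1"
  shows "(a - b)^2 \<le> (a - b) * (ln a - ln b)"
proof (cases "b \<le> a")
  case True thus ?thesis using ineq_W1 assms by blast
next
  case False
  hence "(b - a)^2 \<le> (b - a) * (ln b - ln a)" using ineq_W1[of b a] assms by auto
  thus ?thesis by (simp add: power2_commute algebra_simps)
qed

lemma ineq_lip1:
  fixes a b \<rho> :: real
  assumes "0 < \<rho>" "\<rho> \<le> b" "b \<le> a"
  shows "ln a - ln b \<le> (a - b)/\<rho>"
proof -
  have "ln (a/b) \<le> a/b - 1" using assms by (intro ln_le_minus_one) auto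
  hence "ln a - ln b \<le> (a - b)/b" using assms by (simp add: ln_div field_simps)
  also have "\<dots> \<le> (a - b)/\<rho>" using assms by (intro divide_left_mono) auto
  finally show ?thesis .
qed

lemma ineq_lip:
  fixes a b \<rho> :: real
  assumes "0 < \<rho>" "\<rho> \<le> a" "\<rho> \<le> b"
  shows "\<bar>ln a - ln b\<bar> \<le> \<bar>a - b\<bar>/\<rho>"
proof (cases "b \<le> a")
  case True thus ?thesis using ineq_lip1[of \<rho> b a] assms by (simp add: abs_of_nonneg)
next
  case False thus ?thesis using ineq_lip1[of \<rho> a b] assms by (simp add: abs_of_nonpos)
qed

lemma ineq_amgm:
  fixes d g \<rho> :: real
  assumes "0 < \<rho>" "\<bar>e\<bar> \<le> \<bar>g\<bar> / \<rho>"
  shows "d * e \<le> d^2/2 + g^2/(2*\<rho>^2)"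
proof -
  have "d * e \<le> \<bar>d\<bar> * \<bar>e\<bar>" by (simp add: abs_mult[symmetric])
  also have "\<dots> \<le> \<bar>d\<bar> * (\<bar>g\<bar> / \<rho>)" using assms by (intro mult_left_mono) auto
  also have "\<dots> \<le> d^2/2 + g^2/(2*\<rho>^2)"
  proof -
    have "0 \<le> (\<bar>d\<bar> - \<bar>g\<bar>/\<rho>)^2" by simp
    hence "0 \<le> d^2 - 2 * (\<bar>d\<bar> * (\<bar>g\<bar> / \<rho>)) + g^2/\<rho>^2"
      by (simp add: power2_diff power_divide)
    thus ?thesis by (simp add: field_simps)
  qed
  finally show ?thesis .
qed

lemma coord_cont [continuous_intros]:
  "continuous_on S (\<lambda>x::nat \<Rightarrow> nat \<Rightarrow> real. x i s)"
proof -
  have "continuous_on S (\<lambda>x::nat \<Rightarrow> nat \<Rightarrow> real. x i)"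
    by (rule continuous_on_product_then_coordinatewise) (rule continuous_on_id)
  thus ?thesis by (rule continuous_on_product_then_coordinatewise)
qed

lemma compact_PiE_UNIV:
  fixes K :: "'b::topological_space set"
  assumes "compact K"
  shows "compact (Pi\<^sub>E (UNIV::'a set) (\<lambda>_. K))"
proof -
  have "compactin (product_topology (\<lambda>i::'a. euclidean) UNIV) (Pi\<^sub>E UNIV (\<lambda>_. K))"
    using assms by (simp add: compactin_PiE)
  thus ?thesis by (simp add: euclidean_product_topology)
qed

lemma compact_box: "compact {x :: nat \<Rightarrow> nat \<Rightarrow> real. \<forall>i s. x i s \<in> {0..1}}"
proof -
  have "{x :: nat \<Rightarrow> nat \<Rightarrow> real. \<forall>i s. x i s \<in> {0..1}} = Pi\<^sub>E UNIV (\<lambda>_. Pi\<^sub>E UNIV (\<lambda>_. {0..1}))"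
    by (auto simp: PiE_UNIV_domain Pi_iff)
  also have "compact \<dots>" by (intro compact_PiE_UNIV) auto
  finally show ?thesis .
qed

lemma open_Collect_const: "open {x. c}"
  by (cases c) auto

lemma prod_le_member:
  fixes g :: "'a \<Rightarrow> real"
  assumes "finite I" "k \<in> I" "\<And>j. j \<in> I \<Longrightarrow> 0 \<le> g j \<and> g j \<le> 1"
  shows "prod g I \<le> g k"
proof -
  have "prod g I = g k * prod g (I - {k})" using assms by (simp add: prod.remove)
  also have "\<dots> \<le> g k * 1" using assms by (intro mult_left_mono prod_le_1) auto
  finally show ?thesis by simp
qed

lemma mono_deriv:
  fixes g g' :: "real \<Rightarrow> real"
  assumes a: "0 \<le> a" "a \<le> b"
    and d: "\<And>t. a \<le> t \<Longrightarrow> t \<le> b \<Longrightarrow> (g has_real_derivative g' t) (at t within {0..})"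
    and nn: "\<And>t. a < t \<Longrightarrow> t < b \<Longrightarrow> 0 \<le> g' t"
  shows "g a \<le> g b"
proof (rule DERIV_nonneg_imp_increasing_open[OF a(2)])
  fix x assume x: "a < x" "x < b"
  have "(g has_real_derivative g' x) (at x within {0<..})"
    by (rule DERIV_subset[where s="{0..}"]) (use d[of x] x in auto)
  moreover have "at x within {0<..} = at x" using x a by (intro at_within_open) auto
  ultimately show "\<exists>y. DERIV g x :> y \<and> 0 \<le> y" using nn x by auto
next
  show "continuous_on {a..b} g"
    unfolding continuous_on_eq_continuous_within
  proof
    fix t assume t: "t \<in> {a..b}"
    have "continuous (at t within {0..}) g" using d[of t] t by (intro DERIV_continuous) auto
    thus "continuous (at t within {a..b}) g" by (rule continuous_within_subset) (use a in auto)
  qed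
qed

lemma const_deriv:
  fixes g :: "real \<Rightarrow> real"
  assumes a: "0 \<le> a" "a \<le> b"
    and d: "\<And>t. a \<le> t \<Longrightarrow> t \<le> b \<Longrightarrow> (g has_real_derivative 0) (at t within {0..})"
  shows "g a = g b"
proof -
  have "g a \<le> g b" by (rule mono_deriv[OF a d]) auto
  moreover have "- g a \<le> - g b"
  proof (rule mono_deriv[OF a, where g' = "\<lambda>_. 0"])
    fix t assume "a \<le> t" "t \<le> b"
    from DERIV_minus[OF d[OF this]] show "((\<lambda>x. - g x) has_real_derivative 0) (at t within {0..})" by simp
  qed auto
  ultimately show ?thesis by simp
qed

locale qg =
  fixes n :: nat and m :: "nat \<Rightarrow> nat" and E :: "nat \<Rightarrow> nat \<Rightarrow> bool"
    and A :: "nat \<Rightarrow> nat \<Rightarrow> nat \<Rightarrow> nat \<Rightarrow> real" and \<beta> :: real and \<omega> :: "nat \<Rightarrow> real"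
  assumes mpos: "\<And>i. i < n \<Longrightarrow> 1 \<le> m i" and bpos: "0 < \<beta>"
    and wpos: "\<And>i. i < n \<Longrightarrow> 0 < \<omega> i"
    and zs: "\<And>x. x \<in> simplex_prod n m \<Longrightarrow> (\<Sum>i<n. \<omega> i * payoff n m E A i x) = 0"
begin

abbreviation "P \<equiv> simplex_prod n m"
abbreviation uu where "uu i s x \<equiv> util n m E A i s x"
abbreviation ff where "ff i s x \<equiv> logit n m E A \<beta> i s x"
definition Lg where "Lg i x = (\<Sum>s<m i. exp (\<beta> * uu i s x))"
definition F where "F x = (\<lambda>i s. if i < n \<and> s < m i then ff i s x else 0)"
definition cl where "cl x = (\<lambda>i s. if i < n \<and> s < m i then x i s else (0::real))"
definition V where "V x = (\<Sum>i<n. \<omega> i * ((\<Sum>s<m i. x i s * ln (x i s)) + ln (Lg i x)))"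
definition W where "W x = (\<Sum>i<n. \<omega> i * (\<Sum>s<m i. (ff i s x - x i s) * (ln (ff i s x) - ln (x i s))))"
definition H where "H x = (\<Sum>i<n. \<omega> i * (\<Sum>s<m i. (x i s - ff i s x)^2))"
definition Bf where "Bf a b = (\<Sum>i<n. \<omega> i * (\<Sum>s<m i. a i s * uu i s b))"
definition D where "D x d = (\<Sum>i<n. \<omega> i * ((\<Sum>s<m i. d i s * (ln (x i s) + 1)) + \<beta> * (\<Sum>s<m i. ff i s x * uu i s d)))"

lemma Lg_pos: "i < n \<Longrightarrow> 0 < Lg i x"
  unfolding Lg_def using mpos[of i] by (intro sum_pos) (auto simp: lessThan_empty_iff)

lemma f_eq: "ff i s x = exp (\<beta> * uu i s x) / Lg i x"
  by (simp add: logit_def Lg_def)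

lemma f_pos: "i < n \<Longrightarrow> 0 < ff i s x"
  using Lg_pos[of i x] by (simp add: f_eq)

lemma f_sum: "i < n \<Longrightarrow> (\<Sum>s<m i. ff i s x) = 1"
  using Lg_pos[of i x] by (simp add: f_eq sum_divide_distrib[symmetric] Lg_def[symmetric])

lemma f_le1: "i < n \<Longrightarrow> s < m i \<Longrightarrow> ff i s x \<le> 1"
proof -
  assume a: "i < n" "s < m i"
  have "ff i s x \<le> (\<Sum>s<m i. ff i s x)"
    using a f_pos[OF a(1)] by (intro member_le_sum) (auto intro: less_imp_le)
  thus ?thesis using f_sum[OF a(1)] by simp
qed

lemma ln_f: "i < n \<Longrightarrow> ln (ff i s x) = \<beta> * uu i s x - ln (Lg i x)"
  using Lg_pos[of i x] by (simp add: f_eq ln_div)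

lemma u_cl: "uu i s (cl x) = uu i s x"
  unfolding util_def cl_def neighbors_def by (intro sum.cong refl) auto

lemma f_cl: "ff i s (cl x) = ff i s x"
  by (simp add: logit_def u_cl)

lemma Lg_cl: "Lg i (cl x) = Lg i x"
  by (simp add: Lg_def u_cl)

lemma u_lin: "uu i s (\<lambda>j t. a * x j t + b * y j t) = a * uu i s x + b * uu i s y"
  unfolding util_def by (simp add: algebra_simps sum.distrib sum_distrib_left)

lemma u_diff: "uu i s (\<lambda>j t. x j t - y j t) = uu i s x - uu i s y"
  using u_lin[of i s 1 x "-1" y] by simp

lemma u_scale: "uu i s (\<lambda>j t. a * x j t) = a * uu i s x"
  unfolding util_def by (simp add: algebra_simps sum_distrib_left)

lemma P_nonneg: "x \<in> P \<Longrightarrow> i < n \<Longrightarrow> s < m i \<Longrightarrow> 0 \<le> x i s"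
  by (simp add: simplex_prod_def)

lemma P_sum: "x \<in> P \<Longrightarrow> i < n \<Longrightarrow> (\<Sum>s<m i. x i s) = 1"
  by (simp add: simplex_prod_def)

lemma P_out: "x \<in> P \<Longrightarrow> \<not> (i < n \<and> s < m i) \<Longrightarrow> x i s = 0"
  by (auto simp add: simplex_prod_def)

lemma P_le1: "x \<in> P \<Longrightarrow> i < n \<Longrightarrow> s < m i \<Longrightarrow> x i s \<le> 1"
proof -
  assume a: "x \<in> P" "i < n" "s < m i"
  have "x i s \<le> (\<Sum>s<m i. x i s)"
    using a P_nonneg[OF a(1,2)] by (intro member_le_sum) auto
  thus ?thesis using P_sum[OF a(1,2)] by simp
qed

lemma P_I: "(\<And>i s. i < n \<Longrightarrow> s < m i \<Longrightarrow> 0 \<le> x i s) \<Longrightarrow> (\<And>i. i < n \<Longrightarrow> (\<Sum>s<m i. x i s) = 1)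
   \<Longrightarrow> (\<And>i s. \<not> (i < n \<and> s < m i) \<Longrightarrow> x i s = 0) \<Longrightarrow> x \<in> P"
  unfolding simplex_prod_def by auto

lemma F_P: "F x \<in> P"
  by (rule P_I) (auto simp: F_def f_sum intro: less_imp_le f_pos)

lemma F_in: "i < n \<Longrightarrow> s < m i \<Longrightarrow> F x i s = ff i s x"
  by (simp add: F_def)

lemma cl_in: "i < n \<Longrightarrow> s < m i \<Longrightarrow> cl x i s = x i s"
  by (simp add: cl_def)

lemma cl_P: "x \<in> P \<Longrightarrow> cl x = x"
  by (auto simp: cl_def fun_eq_iff P_out)

lemma payoff_eq: "payoff n m E A i x = (\<Sum>s<m i. x i s * uu i s x)"
  unfolding payoff_def util_def
  by (subst sum.swap) (simp add: sum_distrib_left mult.assoc)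

lemma Bf_self: "x \<in> P \<Longrightarrow> Bf x x = 0"
  using zs[of x] by (simp add: Bf_def payoff_eq)

lemma mid_P: "x \<in> P \<Longrightarrow> y \<in> P \<Longrightarrow> (\<lambda>i s. x i s / 2 + y i s / 2) \<in> P"
  by (rule P_I) (auto simp: P_nonneg P_sum P_out sum.distrib sum_divide_distrib[symmetric])

lemma Bf_expand: "Bf (\<lambda>i s. a * x i s + b * y i s) (\<lambda>i s. c * z i s + d * w i s)
   = a*c * Bf x z + a*d * Bf x w + b*c*Bf y z + b*d*Bf y w"
  unfolding Bf_def u_lin
  by (simp add: algebra_simps sum.distrib sum_distrib_left)

lemma Bf_skew: "x \<in> P \<Longrightarrow> y \<in> P \<Longrightarrow> Bf x y + Bf y x = 0"
proof -
  assume a: "x \<in> P" "y \<in> P"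
  have "0 = Bf (\<lambda>i s. x i s / 2 + y i s / 2) (\<lambda>i s. x i s / 2 + y i s / 2)"
    using Bf_self[OF mid_P[OF a]] by simp
  also have "\<dots> = (Bf x x + Bf x y + Bf y x + Bf y y) / 4"
    using Bf_expand[of "1/2" x "1/2" y "1/2" x "1/2" y] by (simp add: algebra_simps)
  finally show ?thesis using Bf_self[OF a(1)] Bf_self[OF a(2)] by simp
qed

lemma Bf_diff: "x \<in> P \<Longrightarrow> y \<in> P \<Longrightarrow> Bf (\<lambda>i s. x i s - y i s) (\<lambda>i s. x i s - y i s) = 0"
  using Bf_expand[of 1 x "-1" y 1 x "-1" y] Bf_skew[of x y] Bf_self[of x] Bf_self[of y]
  by simp

lemma V_KL: assumes x: "x \<in> P"
  shows "V x = (\<Sum>i<n. \<omega> i * (\<Sum>s<m i. x i s * (ln (x i s) - ln (ff i s x))))"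
proof -
  have *: "(\<Sum>s<m i. x i s * (ln (x i s) - ln (ff i s x))) =
     ((\<Sum>s<m i. x i s * ln (x i s)) + ln (Lg i x)) - \<beta> * (\<Sum>s<m i. x i s * uu i s x)" if i: "i < n" for i
  proof -
    have "(\<Sum>s<m i. x i s * (ln (x i s) - ln (ff i s x))) =
        (\<Sum>s<m i. x i s * ln (x i s) - \<beta> * (x i s * uu i s x) + ln (Lg i x) * x i s)"
      by (rule sum.cong) (simp_all add: ln_f[OF i] algebra_simps)
    also have "\<dots> = (\<Sum>s<m i. x i s * ln (x i s)) - \<beta> * (\<Sum>s<m i. x i s * uu i s x) + ln (Lg i x) * (\<Sum>s<m i. x i s)"
      by (simp add: sum.distrib sum_subtractf sum_distrib_left)
    finally show ?thesis using P_sum[OF x i] by simp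
  qed
  have "(\<Sum>i<n. \<omega> i * (\<Sum>s<m i. x i s * (ln (x i s) - ln (ff i s x)))) =
     (\<Sum>i<n. \<omega> i * ((\<Sum>s<m i. x i s * ln (x i s)) + ln (Lg i x)) - \<beta> * (\<omega> i * (\<Sum>s<m i. x i s * uu i s x)))"
    by (rule sum.cong[OF refl], subst *, simp, simp add: algebra_simps)
  also have "\<dots> = V x - \<beta> * Bf x x"
    by (simp add: V_def Bf_def sum_subtractf sum_distrib_left)
  finally show ?thesis using Bf_self[OF x] by simp
qed

lemma V_ge_H: assumes x: "x \<in> P" shows "H x / 4 \<le> V x"
proof -
  have "\<omega> i * (\<Sum>s<m i. (x i s - ff i s x)^2) / 4 \<le> \<omega> i * (\<Sum>s<m i. x i s * (ln (x i s) - ln (ff i s x)))"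
    if i: "i < n" for i
  proof -
    have "(\<Sum>s<m i. (x i s - ff i s x)^2 / 4) \<le> (\<Sum>s<m i. x i s * (ln (x i s) - ln (ff i s x)) + ff i s x - x i s)"
      using i by (intro sum_mono ineq_low) (auto simp: P_nonneg[OF x] P_le1[OF x] f_pos f_le1)
    also have "\<dots> = (\<Sum>s<m i. x i s * (ln (x i s) - ln (ff i s x)))"
      using i by (simp add: sum.distrib sum_subtractf f_sum P_sum[OF x])
    finally show ?thesis using wpos[OF i]
      by (simp add: sum_divide_distrib[symmetric] mult_left_mono flip: times_divide_eq_right)
  qed
  hence "(\<Sum>i<n. \<omega> i * (\<Sum>s<m i. (x i s - ff i s x)^2) / 4) \<le> V x"
    unfolding V_KL[OF x] by (intro sum_mono) auto
  thus ?thesis by (simp add: H_def sum_divide_distrib)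
qed

lemma V_le_H: assumes x: "x \<in> P" and d: "0 < \<delta>" "\<And>i s. i < n \<Longrightarrow> s < m i \<Longrightarrow> \<delta> \<le> ff i s x"
  shows "V x \<le> H x / \<delta>"
proof -
  have "\<omega> i * (\<Sum>s<m i. x i s * (ln (x i s) - ln (ff i s x))) \<le> \<omega> i * (\<Sum>s<m i. (x i s - ff i s x)^2) / \<delta>"
    if i: "i < n" for i
  proof -
    have "(\<Sum>s<m i. x i s * (ln (x i s) - ln (ff i s x))) \<le> (\<Sum>s<m i. (x i s - ff i s x)^2 / \<delta> + x i s - ff i s x)"
    proof (intro sum_mono)
      fix s assume s: "s \<in> {..<m i}"
      have "x i s * (ln (x i s) - ln (ff i s x)) \<le> (x i s - ff i s x)^2 / ff i s x + x i s - ff i s x"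
        using i s by (intro ineq_up) (auto simp: P_nonneg[OF x] f_pos)
      also have "(x i s - ff i s x)^2 / ff i s x \<le> (x i s - ff i s x)^2 / \<delta>"
        using i s d by (intro divide_left_mono) (auto simp: f_pos)
      finally show "x i s * (ln (x i s) - ln (ff i s x)) \<le> (x i s - ff i s x)^2 / \<delta> + x i s - ff i s x" by simp
    qed
    also have "\<dots> = (\<Sum>s<m i. (x i s - ff i s x)^2) / \<delta>"
      using i by (simp add: sum.distrib sum_subtractf f_sum P_sum[OF x] sum_divide_distrib)
    finally show ?thesis using wpos[OF i] by (simp add: mult_left_mono flip: times_divide_eq_right)
  qed
  hence "V x \<le> (\<Sum>i<n. \<omega> i * (\<Sum>s<m i. (x i s - ff i s x)^2) / \<delta>)"
    unfolding V_KL[OF x] by (intro sum_mono) auto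
  thus ?thesis by (simp add: H_def sum_divide_distrib)
qed

lemma W_ge_H: assumes x: "x \<in> P" and pos: "\<And>i s. i < n \<Longrightarrow> s < m i \<Longrightarrow> 0 < x i s"
  shows "H x \<le> W x"
proof -
  have "\<omega> i * (\<Sum>s<m i. (x i s - ff i s x)\<^sup>2) \<le> \<omega> i * (\<Sum>s<m i. (ff i s x - x i s) * (ln (ff i s x) - ln (x i s)))"
    if i: "i < n" for i
  proof (intro mult_left_mono sum_mono)
    show "0 \<le> \<omega> i" using wpos i by (auto intro: less_imp_le)
    fix s assume s: "s \<in> {..<m i}"
    have "(ff i s x - x i s)^2 \<le> (ff i s x - x i s) * (ln (ff i s x) - ln (x i s))"
      using i s by (intro ineq_W f_pos f_le1 pos P_le1[OF x]) auto
    thus "(x i s - ff i s x)^2 \<le> (ff i s x - x i s) * (ln (ff i s x) - ln (x i s))"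
      by (simp add: power2_commute)
  qed
  thus ?thesis unfolding H_def W_def by (intro sum_mono) auto
qed

definition Q where "Q x y = (\<Sum>i<n. \<omega> i * (\<Sum>s<m i. (x i s - y i s)^2))"

lemma KI:
  assumes x: "x \<in> P" and y: "y \<in> P" and yq: "\<And>i s. i < n \<Longrightarrow> s < m i \<Longrightarrow> y i s = ff i s y"
    and r: "0 < \<rho>" and rx: "\<And>i s. i < n \<Longrightarrow> s < m i \<Longrightarrow> \<rho> \<le> x i s"
    and rf: "\<And>i s. i < n \<Longrightarrow> s < m i \<Longrightarrow> \<rho> \<le> ff i s x"
  shows "Q x y \<le> H x / \<rho>^2"
proof -
  define d where "d = (\<lambda>j t. x j t - y j t)"
  define Sd where "Sd = (\<Sum>i<n. \<omega> i * (\<Sum>s<m i. d i s * (ln (x i s) - ln (y i s))))"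
  define Sg where "Sg = (\<Sum>i<n. \<omega> i * (\<Sum>s<m i. d i s * (ln (x i s) - ln (ff i s x))))"
  have per: "(\<Sum>s<m i. d i s * (ln (x i s) - ln (y i s))) =
      (\<Sum>s<m i. d i s * (ln (x i s) - ln (ff i s x))) + \<beta> * (\<Sum>s<m i. d i s * uu i s d)" if i: "i < n" for i
  proof -
    have "(\<Sum>s<m i. d i s * (ln (x i s) - ln (y i s))) =
       (\<Sum>s<m i. d i s * (ln (x i s) - ln (ff i s x)) + \<beta> * (d i s * uu i s d) - (ln (Lg i x) - ln (Lg i y)) * d i s)"
    proof (rule sum.cong[OF refl])
      fix s assume s: "s \<in> {..<m i}"
      have h1: "ln (y i s) = \<beta> * uu i s y - ln (Lg i y)" using yq[of i s] i s ln_f[OF i] by simp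
      have h2: "uu i s d = uu i s x - uu i s y" unfolding d_def by (rule u_diff)
      have h3: "ln (ff i s x) = \<beta> * uu i s x - ln (Lg i x)" using ln_f[OF i] .
      show "d i s * (ln (x i s) - ln (y i s)) = d i s * (ln (x i s) - ln (ff i s x)) + \<beta> * (d i s * uu i s d) - (ln (Lg i x) - ln (Lg i y)) * d i s"
        unfolding h1 h2 h3 by (simp add: algebra_simps)
    qed
    also have "\<dots> = (\<Sum>s<m i. d i s * (ln (x i s) - ln (ff i s x))) + \<beta> * (\<Sum>s<m i. d i s * uu i s d) - (ln (Lg i x) - ln (Lg i y)) * (\<Sum>s<m i. d i s)"
      by (simp add: sum.distrib sum_subtractf sum_distrib_left)
    also have "(\<Sum>s<m i. d i s) = 0" using P_sum[OF x i] P_sum[OF y i] by (simp add: d_def sum_subtractf)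
    finally show ?thesis by simp
  qed
  have "Sd = (\<Sum>i<n. \<omega> i * (\<Sum>s<m i. d i s * (ln (x i s) - ln (ff i s x))) + \<beta> * (\<omega> i * (\<Sum>s<m i. d i s * uu i s d)))"
    unfolding Sd_def by (rule sum.cong[OF refl]) (simp only: per distrib_left mult.left_commute lessThan_iff)
  also have "\<dots> = Sg + \<beta> * Bf d d"
    by (simp only: sum.distrib Sg_def Bf_def sum_distrib_left)
  finally have "Sd = Sg + \<beta> * Bf d d" .
  hence e1: "Sd = Sg" using Bf_diff[OF x y] by (simp add: d_def)
  have e2: "Q x y \<le> Sd"
    unfolding Q_def Sd_def
  proof (intro sum_mono mult_left_mono)
    fix i assume i: "i \<in> {..<n}"
    show "0 \<le> \<omega> i" using wpos i by (auto intro: less_imp_le)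
  next
    fix i s assume i: "i \<in> {..<n}" and s: "s \<in> {..<m i}"
    show "(x i s - y i s)^2 \<le> d i s * (ln (x i s) - ln (y i s))"
      unfolding d_def using i s r rx[of i s] yq[of i s] f_pos[of i s y]
      by (intro ineq_W P_le1[OF x] P_le1[OF y]) auto
  qed
  have e3: "Sg \<le> Q x y / 2 + H x / (2 * \<rho>^2)"
  proof -
    have "Sg \<le> (\<Sum>i<n. \<omega> i * (\<Sum>s<m i. (x i s - y i s)^2 / 2 + (x i s - ff i s x)^2 / (2*\<rho>^2)))"
      unfolding Sg_def
    proof (intro sum_mono mult_left_mono)
      fix i assume i: "i \<in> {..<n}"
      show "0 \<le> \<omega> i" using wpos i by (auto intro: less_imp_le)
    next
      fix i s assume i: "i \<in> {..<n}" and s: "s \<in> {..<m i}"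
      show "d i s * (ln (x i s) - ln (ff i s x)) \<le> (x i s - y i s)^2 / 2 + (x i s - ff i s x)^2 / (2*\<rho>^2)"
        unfolding d_def using i s r by (intro ineq_amgm ineq_lip rx rf) auto
    qed
    also have "\<dots> = Q x y / 2 + H x / (2 * \<rho>^2)"
      by (simp add: Q_def H_def sum.distrib sum_divide_distrib[symmetric] distrib_left)
    finally show ?thesis .
  qed
  have "H x / (2 * \<rho>^2) = (H x / \<rho>^2) / 2" by simp
  thus ?thesis using e1 e2 e3 by linarith
qed

lemma DL:
  assumes dg: "\<And>i s. i < n \<Longrightarrow> s < m i \<Longrightarrow> ((\<lambda>\<tau>. \<gamma> \<tau> i s) has_real_derivative \<gamma>' i s) (at t within S)"
    and pos: "\<And>i s. i < n \<Longrightarrow> s < m i \<Longrightarrow> 0 < \<gamma> t i s"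
  shows "((\<lambda>\<tau>. V (\<gamma> \<tau>)) has_real_derivative D (\<gamma> t) \<gamma>') (at t within S)"
proof -
  have du: "((\<lambda>\<tau>. uu i s (\<gamma> \<tau>)) has_real_derivative uu i s \<gamma>') (at t within S)" for i s
    unfolding util_def
    by (intro DERIV_sum DERIV_cmult dg) (auto simp: neighbors_def)
  have dL: "((\<lambda>\<tau>. Lg i (\<gamma> \<tau>)) has_real_derivative (\<Sum>s<m i. exp (\<beta> * uu i s (\<gamma> t)) * (\<beta> * uu i s \<gamma>'))) (at t within S)" for i
    unfolding Lg_def
    by (intro DERIV_sum) (rule derivative_eq_intros du refl | simp)+
  have dlnL: "((\<lambda>\<tau>. ln (Lg i (\<gamma> \<tau>))) has_real_derivative \<beta> * (\<Sum>s<m i. ff i s (\<gamma> t) * uu i s \<gamma>')) (at t within S)"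
    if i: "i < n" for i
  proof -
    have "((\<lambda>\<tau>. ln (Lg i (\<gamma> \<tau>))) has_real_derivative 1 / Lg i (\<gamma> t) * (\<Sum>s<m i. exp (\<beta> * uu i s (\<gamma> t)) * (\<beta> * uu i s \<gamma>'))) (at t within S)"
      by (rule derivative_eq_intros dL refl | simp add: Lg_pos[OF i])+
    also have "1 / Lg i (\<gamma> t) * (\<Sum>s<m i. exp (\<beta> * uu i s (\<gamma> t)) * (\<beta> * uu i s \<gamma>')) = \<beta> * (\<Sum>s<m i. ff i s (\<gamma> t) * uu i s \<gamma>')"
      by (simp add: f_eq sum_distrib_left sum_divide_distrib algebra_simps)
    finally show ?thesis .
  qed
  have dxl: "((\<lambda>\<tau>. \<gamma> \<tau> i s * ln (\<gamma> \<tau> i s)) has_real_derivative \<gamma>' i s * (ln (\<gamma> t i s) + 1)) (at t within S)"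
    if i: "i < n" and s: "s < m i" for i s
  proof -
    have "((\<lambda>\<tau>. \<gamma> \<tau> i s * ln (\<gamma> \<tau> i s)) has_real_derivative \<gamma>' i s * ln (\<gamma> t i s) + \<gamma> t i s * (1 / \<gamma> t i s * \<gamma>' i s)) (at t within S)"
      by (rule derivative_eq_intros dg[OF i s] refl | simp add: pos[OF i s])+
    also have "\<gamma>' i s * ln (\<gamma> t i s) + \<gamma> t i s * (1 / \<gamma> t i s * \<gamma>' i s) = \<gamma>' i s * (ln (\<gamma> t i s) + 1)"
      using pos[OF i s] by (simp add: field_simps)
    finally show ?thesis .
  qed
  show ?thesis
    unfolding V_def D_def
    by (intro DERIV_sum DERIV_cmult DERIV_add dlnL dxl) auto
qed

lemma AL:
  assumes x: "x \<in> P" and pos: "\<And>i s. i < n \<Longrightarrow> s < m i \<Longrightarrow> 0 < x i s"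
  shows "D x (\<lambda>i s. k * (F x i s - x i s)) = - k * W x"
proof -
  define d where "d = (\<lambda>i s. k * (F x i s - x i s))"
  have ud: "uu i s d = k * (uu i s (F x) - uu i s x)" for i s
    unfolding d_def using u_lin[of i s k "F x" "-k" x] by (simp add: algebra_simps)
  have per: "(\<Sum>s<m i. d i s * (ln (x i s) + 1)) + \<beta> * (\<Sum>s<m i. ff i s x * uu i s d)
     = k * (\<beta> * (\<Sum>s<m i. F x i s * uu i s (F x)) - \<beta> * (\<Sum>s<m i. x i s * uu i s x)
        - (\<Sum>s<m i. (ff i s x - x i s) * (ln (ff i s x) - ln (x i s))))" if i: "i < n" for i
  proof -
    have "(\<Sum>s<m i. d i s * (ln (x i s) + 1)) + \<beta> * (\<Sum>s<m i. ff i s x * uu i s d)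
        = (\<Sum>s<m i. k * (\<beta> * (ff i s x * uu i s (F x)) - \<beta> * (x i s * uu i s x)
             - (ff i s x - x i s) * (ln (ff i s x) - ln (x i s))) + k * (ff i s x - x i s) + k * ln (Lg i x) * (x i s - ff i s x))"
      unfolding sum_distrib_left sum.distrib[symmetric]
    proof (rule sum.cong[OF refl])
      fix s assume s: "s \<in> {..<m i}"
      have h: "ln (x i s) = \<beta> * uu i s x - ln (Lg i x) - (ln (ff i s x) - ln (x i s))"
        using ln_f[OF i, of s x] by simp
      show "d i s * (ln (x i s) + 1) + \<beta> * (ff i s x * uu i s d) =
        k * (\<beta> * (ff i s x * uu i s (F x)) - \<beta> * (x i s * uu i s x) - (ff i s x - x i s) * (ln (ff i s x) - ln (x i s))) +
         k * (ff i s x - x i s) + k * ln (Lg i x) * (x i s - ff i s x)"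
        unfolding ud unfolding d_def F_in[OF i s[simplified]]
        apply (subst (1) h)
        by (simp add: algebra_simps)
    qed
    also have "\<dots> = k * (\<beta> * (\<Sum>s<m i. ff i s x * uu i s (F x)) - \<beta> * (\<Sum>s<m i. x i s * uu i s x)
        - (\<Sum>s<m i. (ff i s x - x i s) * (ln (ff i s x) - ln (x i s))))
        + k * ((\<Sum>s<m i. ff i s x) - (\<Sum>s<m i. x i s)) + k * ln (Lg i x) * ((\<Sum>s<m i. x i s) - (\<Sum>s<m i. ff i s x))"
      by (simp add: sum.distrib sum_subtractf sum_distrib_left sum_distrib_right algebra_simps)
    also have "(\<Sum>s<m i. ff i s x) = 1" using f_sum[OF i] .
    also have "(\<Sum>s<m i. x i s) = 1" using P_sum[OF x i] .
    also have "(\<Sum>s<m i. ff i s x * uu i s (F x)) = (\<Sum>s<m i. F x i s * uu i s (F x))"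
      by (rule sum.cong) (auto simp: F_in[OF i])
    finally show ?thesis by simp
  qed
  have "D x d = (\<Sum>i<n. k * (\<beta> * (\<omega> i * (\<Sum>s<m i. F x i s * uu i s (F x))) - \<beta> * (\<omega> i * (\<Sum>s<m i. x i s * uu i s x))
        - \<omega> i * (\<Sum>s<m i. (ff i s x - x i s) * (ln (ff i s x) - ln (x i s)))))"
    unfolding D_def by (rule sum.cong[OF refl]) (simp only: per lessThan_iff, simp add: algebra_simps)
  also have "\<dots> = k * (\<beta> * Bf (F x) (F x) - \<beta> * Bf x x - W x)"
    by (simp only: Bf_def W_def sum_distrib_left sum_subtractf right_diff_distrib)
  finally show ?thesis using Bf_self[OF x] Bf_self[OF F_P] by (simp add: d_def)
qed

lemma closed_P: "closed P"
  unfolding simplex_prod_def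
  by (intro closed_Collect_conj closed_Collect_all closed_Collect_imp closed_Collect_le closed_Collect_eq
      continuous_intros open_Collect_const)

lemma P_box: "x \<in> P \<Longrightarrow> x i s \<in> {0..1}"
proof -
  assume x: "x \<in> P"
  show ?thesis
  proof (cases "i < n \<and> s < m i")
    case True thus ?thesis using P_nonneg[OF x] P_le1[OF x] by simp
  next
    case False thus ?thesis using P_out[OF x False] by simp
  qed
qed

lemma compact_P: "compact P"
proof -
  have "P = {x :: nat \<Rightarrow> nat \<Rightarrow> real. \<forall>i s. x i s \<in> {0..1}} \<inter> P"
    using P_box by blast
  thus ?thesis using compact_box closed_P by (metis compact_Int_closed)
qed

definition unif where "unif = (\<lambda>i s. if i < n \<and> s < m i then 1 / real (m i) else 0)"

lemma unif_P: "unif \<in> P"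
proof (rule P_I)
  fix i assume i: "i < n"
  have "(\<Sum>s<m i. unif i s) = (\<Sum>s<m i. 1 / real (m i))" by (rule sum.cong) (auto simp: unif_def i)
  thus "(\<Sum>s<m i. unif i s) = 1" using mpos[OF i] by simp
qed (auto simp: unif_def)

lemma cont_u [continuous_intros]: "continuous_on S (\<lambda>x. uu i s x)"
  unfolding util_def by (intro continuous_intros)

lemma cont_Lg [continuous_intros]: "continuous_on S (\<lambda>x. Lg i x)"
  unfolding Lg_def by (intro continuous_intros)

lemma cont_f: "i < n \<Longrightarrow> continuous_on S (\<lambda>x. ff i s x)"
  unfolding f_eq by (intro continuous_intros) (metis Lg_pos less_irrefl)

lemma delta_ex: "\<exists>\<delta>>0. \<forall>x\<in>P. \<forall>i<n. \<forall>s<m i. \<delta> \<le> ff i s x"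
proof -
  define \<Phi> where "\<Phi> x = (\<Prod>i<n. \<Prod>s<m i. ff i s x)" for x
  have "continuous_on P \<Phi>" unfolding \<Phi>_def by (intro continuous_on_prod cont_f) auto
  then obtain p where p: "p \<in> P" "\<And>y. y \<in> P \<Longrightarrow> \<Phi> p \<le> \<Phi> y"
    using continuous_attains_inf[OF compact_P, of \<Phi>] unif_P by blast
  have pos: "0 < \<Phi> p" unfolding \<Phi>_def by (intro prod_pos f_pos) auto
  have le: "\<Phi> x \<le> ff i s x" if "i < n" "s < m i" for x i s
  proof -
    have "\<Phi> x \<le> (\<Prod>s<m i. ff i s x)" unfolding \<Phi>_def
      by (intro prod_le_member) (auto intro!: prod_nonneg prod_le_1 f_le1 less_imp_le[OF f_pos] that)
    also have "\<dots> \<le> ff i s x"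
      by (intro prod_le_member) (auto intro!: f_le1 less_imp_le[OF f_pos] that)
    finally show ?thesis .
  qed
  show ?thesis using pos p le by (meson order.trans)
qed

lemma conv_P:
  assumes x: "x \<in> P" and y: "y \<in> P" and h: "0 \<le> h" "h \<le> 1"
  shows "(\<lambda>i s. x i s + h * (y i s - x i s)) \<in> P"
proof (rule P_I)
  fix i s assume i: "i < n" and s: "s < m i"
  have "0 \<le> (1 - h) * x i s + h * y i s"
    using h P_nonneg[OF x i s] P_nonneg[OF y i s] by simp
  thus "0 \<le> x i s + h * (y i s - x i s)" by (simp add: algebra_simps)
next
  fix i assume i: "i < n"
  show "(\<Sum>s<m i. x i s + h * (y i s - x i s)) = 1"
    using P_sum[OF x i] P_sum[OF y i] by (simp add: sum.distrib sum_subtractf sum_distrib_left[symmetric])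
next
  fix i s assume "\<not> (i < n \<and> s < m i)"
  thus "x i s + h * (y i s - x i s) = 0" using P_out[OF x] P_out[OF y] by simp
qed

lemma conv_lb:
  fixes a b h \<delta> :: real
  assumes "\<delta> \<le> a" "\<delta> \<le> b" "0 \<le> h" "h \<le> 1"
  shows "\<delta> \<le> a + h * (b - a)"
proof -
  have "(1 - h) * \<delta> + h * \<delta> \<le> (1 - h) * a + h * b"
    using assms by (intro add_mono mult_left_mono) auto
  thus ?thesis by (simp add: algebra_simps)
qed

lemma wnn: "i < n \<Longrightarrow> 0 \<le> \<omega> i"
  using wpos[of i] by simp

lemma Lg_ne: "i < n \<Longrightarrow> Lg i x \<noteq> 0"
  using Lg_pos[of i x] by simp

lemma H_pos:
  assumes a: "i < n" "s < m i" "x i s \<noteq> ff i s x"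
  shows "0 < H x"
proof -
  have inner: "0 < (\<Sum>s<m i. (x i s - ff i s x)\<^sup>2)"
    apply (rule sum_pos2[where i=s]) using a by auto
  have t: "0 < \<omega> i * (\<Sum>s<m i. (x i s - ff i s x)\<^sup>2)"
    using inner wpos[OF a(1)] by simp
  show ?thesis unfolding H_def
    apply (rule sum_pos2[where i=i])
    using a t by (auto intro!: mult_nonneg_nonneg sum_nonneg wnn)
qed

lemma QRE_exists: "\<exists>x\<in>P. \<forall>i<n. \<forall>s<m i. x i s = ff i s x"
proof -
  obtain \<delta> where \<delta>: "\<delta> > 0" "\<And>x i s. x \<in> P \<Longrightarrow> i < n \<Longrightarrow> s < m i \<Longrightarrow> \<delta> \<le> ff i s x"
    using delta_ex by blast
  define Pd where "Pd = P \<inter> {x. \<forall>i. i < n \<longrightarrow> (\<forall>s. s < m i \<longrightarrow> \<delta> \<le> x i s)}"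
  have FPd: "F x \<in> Pd" if "x \<in> P" for x
    using F_P \<delta>(2)[OF that] by (auto simp: Pd_def F_in)
  have "closed {x. \<forall>i. i < n \<longrightarrow> (\<forall>s. s < m i \<longrightarrow> \<delta> \<le> x i s)}"
    by (intro closed_Collect_all closed_Collect_imp closed_Collect_le continuous_intros open_Collect_const)
  hence cPd: "compact Pd" unfolding Pd_def using compact_P by (intro compact_Int_closed)
  have nPd: "Pd \<noteq> {}" using FPd[OF unif_P] by auto
  have "continuous_on Pd V"
    unfolding V_def
    by (intro continuous_intros) (use \<delta>(1) in \<open>force simp: Pd_def Lg_ne\<close>)+
  then obtain p where p: "p \<in> Pd" "\<And>y. y \<in> Pd \<Longrightarrow> V p \<le> V y"
    using continuous_attains_inf[OF cPd nPd] by blast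
  have pP: "p \<in> P" and plb: "\<And>i s. i < n \<Longrightarrow> s < m i \<Longrightarrow> \<delta> \<le> p i s" using p(1) by (auto simp: Pd_def)
  show ?thesis
  proof (rule ccontr)
    assume "\<not> ?thesis"
    then obtain i s where isd: "i < n" "s < m i" "p i s \<noteq> ff i s p" using pP by blast
    have ppos: "\<And>i s. i < n \<Longrightarrow> s < m i \<Longrightarrow> 0 < p i s" using plb \<delta>(1) by (meson less_le_trans)
    have Wp: "0 < W p" using H_pos[OF isd] W_ge_H[OF pP ppos] by linarith
    define \<gamma> where "\<gamma> h = (\<lambda>i s. p i s + h * (F p i s - p i s))" for h :: real
    have g0: "\<gamma> 0 = p" by (simp add: \<gamma>_def)
    have "((\<lambda>h. V (\<gamma> h)) has_real_derivative D (\<gamma> 0) (\<lambda>i s. F p i s - p i s)) (at 0)"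
    proof (rule DL)
      fix i s assume "i < n" "s < m i"
      show "((\<lambda>\<tau>. \<gamma> \<tau> i s) has_real_derivative F p i s - p i s) (at 0)"
        unfolding \<gamma>_def by (rule derivative_eq_intros refl | simp)+
      show "0 < \<gamma> 0 i s" using ppos \<open>i < n\<close> \<open>s < m i\<close> by (simp add: g0)
    qed
    moreover have "D (\<gamma> 0) (\<lambda>i s. F p i s - p i s) = - W p"
      using AL[OF pP ppos, of 1] by (simp add: g0)
    ultimately have "DERIV (\<lambda>h. V (\<gamma> h)) 0 :> - W p" by simp
    from DERIV_neg_dec_right[OF this] Wp obtain d where d: "d > 0" "\<And>h. h > 0 \<Longrightarrow> h < d \<Longrightarrow> V (\<gamma> (0 + h)) < V (\<gamma> 0)"
      by auto
    define h where "h = min (d/2) 1"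
    have h: "0 < h" "h < d" "h \<le> 1" using d(1) by (auto simp: h_def)
    have "\<gamma> h \<in> Pd"
    proof -
      have "\<gamma> h \<in> P" unfolding \<gamma>_def using h by (intro conv_P pP F_P) auto
      moreover have "\<delta> \<le> \<gamma> h i s" if "i < n" "s < m i" for i s
        unfolding \<gamma>_def using h plb[OF that] \<delta>(2)[OF pP that] by (intro conv_lb) (auto simp: F_in[OF that])
      ultimately show ?thesis by (auto simp: Pd_def)
    qed
    hence "V p \<le> V (\<gamma> h)" by (rule p(2))
    moreover have "V (\<gamma> h) < V p" using d(2)[OF h(1,2)] by (simp add: g0)
    ultimately show False by simp
  qed
qed

end
context qg begin
definition dl where "dl = (SOME \<delta>. \<delta> > 0 \<and> (\<forall>x\<in>P. \<forall>i<n. \<forall>s<m i. \<delta> \<le> ff i s x))"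

lemma dl: "0 < dl" "\<And>x i s. x \<in> P \<Longrightarrow> i < n \<Longrightarrow> s < m i \<Longrightarrow> dl \<le> ff i s x"
  using someI_ex[OF delta_ex] unfolding dl_def[symmetric] by auto

lemma Q_coord: "i < n \<Longrightarrow> s < m i \<Longrightarrow> \<omega> i * (x i s - y i s)^2 \<le> Q x y"
proof -
  assume i: "i < n" and s: "s < m i"
  have "\<omega> i * (x i s - y i s)^2 \<le> \<omega> i * (\<Sum>s<m i. (x i s - y i s)^2)"
    using i s by (intro mult_left_mono member_le_sum wnn) auto
  also have "\<dots> \<le> Q x y" unfolding Q_def
    using i by (intro member_le_sum) (auto intro!: mult_nonneg_nonneg sum_nonneg wnn)
  finally show ?thesis .
qed

lemma QRE_unique:
  assumes x: "x \<in> P" "\<And>i s. i < n \<Longrightarrow> s < m i \<Longrightarrow> x i s = ff i s x"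
    and y: "y \<in> P" "\<And>i s. i < n \<Longrightarrow> s < m i \<Longrightarrow> y i s = ff i s y"
  shows "x = y"
proof -
  have H0: "H x = 0" unfolding H_def using x(2) by (intro sum.neutral) simp
  have r1: "dl \<le> x i s" if "i < n" "s < m i" for i s
    using dl(2)[OF x(1) that] x(2)[OF that] by simp
  have r2: "dl \<le> ff i s x" if "i < n" "s < m i" for i s
    using dl(2)[OF x(1) that] .
  have "Q x y \<le> H x / dl^2"
    by (rule KI[OF x(1) y dl(1) r1 r2])
  hence Q0: "Q x y \<le> 0" using H0 by simp
  have "x i s = y i s" for i s
  proof (cases "i < n \<and> s < m i")
    case True
    hence "\<omega> i * (x i s - y i s)^2 \<le> 0" using Q_coord[of i s x y] Q0 by simp
    moreover have "0 < \<omega> i" using wpos True by simp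
    ultimately have "(x i s - y i s)^2 \<le> 0" by (simp add: mult_le_0_iff)
    thus ?thesis by simp
  next
    case False thus ?thesis using P_out[OF x(1) False] P_out[OF y(1) False] by simp
  qed
  thus ?thesis by (simp add: fun_eq_iff)
qed

lemma coord_le_sd: "i < n \<Longrightarrow> s < m i \<Longrightarrow> \<bar>x i s - y i s\<bar> \<le> state_dist n m x y"
proof -
  assume i: "i < n" and s: "s < m i"
  have "\<bar>x i s - y i s\<bar> \<le> (\<Sum>s<m i. \<bar>x i s - y i s\<bar>)"
    using s by (intro member_le_sum) auto
  also have "\<dots> \<le> state_dist n m x y" unfolding state_dist_def
    using i by (intro member_le_sum) (auto intro!: sum_nonneg)
  finally show ?thesis .
qed

lemma tendsto_u:
  assumes "\<And>j t. j < n \<Longrightarrow> t < m j \<Longrightarrow> ((\<lambda>k. Y k j t) \<longlongrightarrow> x j t) Fl"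
  shows "((\<lambda>k. uu i s (Y k)) \<longlongrightarrow> uu i s x) Fl"
  unfolding util_def
  by (intro tendsto_sum tendsto_mult tendsto_const assms) (auto simp: neighbors_def)

lemma tendsto_H:
  assumes "\<And>j t. j < n \<Longrightarrow> t < m j \<Longrightarrow> ((\<lambda>k. Y k j t) \<longlongrightarrow> x j t) Fl"
  shows "((\<lambda>k. H (Y k)) \<longlongrightarrow> H x) Fl"
proof -
  have fl: "((\<lambda>k. ff i s (Y k)) \<longlongrightarrow> ff i s x) Fl" if i: "i < n" for i s
    unfolding f_eq Lg_def
    by (intro tendsto_divide tendsto_sum tendsto_exp tendsto_mult tendsto_const tendsto_u assms)
       (use Lg_ne[OF i, of x] in \<open>auto simp: Lg_def\<close>)
  show ?thesis unfolding H_def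
    by (intro tendsto_sum tendsto_mult tendsto_const tendsto_power tendsto_diff assms fl) auto
qed

lemma H_cont_sd:
  assumes x: "x \<in> P" and e: "\<eta> > 0"
  shows "\<exists>d>0. \<forall>y\<in>P. state_dist n m y x < d \<longrightarrow> H y < H x + \<eta>"
proof (rule ccontr)
  assume "\<not> ?thesis"
  hence a: "\<forall>d>0. \<exists>y\<in>P. state_dist n m y x < d \<and> H x + \<eta> \<le> H y"
    by (meson not_less)
  have "\<forall>k::nat. \<exists>y\<in>P. state_dist n m y x < 1 / real (Suc k) \<and> H x + \<eta> \<le> H y"
  proof
    fix k :: nat
    show "\<exists>y\<in>P. state_dist n m y x < 1 / real (Suc k) \<and> H x + \<eta> \<le> H y"
      using a[rule_format, of "1 / real (Suc k)"] by simp
  qed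
  then obtain Y where Y: "\<And>k. Y k \<in> P" "\<And>k. state_dist n m (Y k) x < 1 / real (Suc k)"
      "\<And>k. H x + \<eta> \<le> H (Y k)" by metis
  have "((\<lambda>k. Y k j t) \<longlongrightarrow> x j t) sequentially" if jt: "j < n" "t < m j" for j t
  proof -
    have "((\<lambda>k. Y k j t - x j t) \<longlongrightarrow> 0) sequentially"
    proof (rule Lim_null_comparison)
      have "norm (Y k j t - x j t) \<le> inverse (real (Suc k))" for k
        using coord_le_sd[OF jt, of "Y k" x] Y(2)[of k] by (simp add: divide_inverse)
      thus "\<forall>\<^sub>F k in sequentially. norm (Y k j t - x j t) \<le> inverse (real (Suc k))"
        by (intro always_eventually allI)
      show "(\<lambda>k. inverse (real (Suc k))) \<longlonglongrightarrow> 0" by (rule LIMSEQ_inverse_real_of_nat)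
    qed
    thus ?thesis by (simp add: LIM_zero_iff)
  qed
  hence "((\<lambda>k. H (Y k)) \<longlongrightarrow> H x) sequentially" by (rule tendsto_H)
  hence "\<forall>\<^sub>F k in sequentially. H (Y k) < H x + \<eta>" using e by (intro order_tendstoD(2)) auto
  then obtain k where "H (Y k) < H x + \<eta>" by (auto simp: eventually_sequentially)
  thus False using Y(3)[of k] by simp
qed

end

locale qtraj = qg +
  fixes lam :: real and \<mu> :: "real \<Rightarrow> nat \<Rightarrow> nat \<Rightarrow> real"
  assumes lam: "0 \<le> lam" and bs: "belief_solution n m E A \<beta> lam \<mu>" and mu0: "\<mu> 0 \<in> P"
begin

definition nu where "nu t = cl (\<mu> t)"

lemma nu_in: "i < n \<Longrightarrow> s < m i \<Longrightarrow> nu t i s = \<mu> t i s"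
  by (simp add: nu_def cl_in)

lemma nu0: "nu 0 = \<mu> 0"
  using mu0 by (simp add: nu_def cl_P)

lemma nu_deriv:
  assumes t: "0 \<le> t" and i: "i < n" and s: "s < m i"
  shows "((\<lambda>\<tau>. nu \<tau> i s) has_real_derivative (ff i s (nu t) - nu t i s) / (lam + t + 1)) (at t within {0..})"
proof -
  have "(\<lambda>\<tau>. nu \<tau> i s) = (\<lambda>\<tau>. \<mu> \<tau> i s)" using i s by (simp add: nu_in)
  moreover have "ff i s (nu t) = ff i s (\<mu> t)" by (simp add: nu_def f_cl)
  ultimately show ?thesis using bs t i s by (simp add: belief_solution_def nu_in)
qed

lemma nu_P: assumes t: "0 \<le> t" shows "nu t \<in> P"
proof (rule P_I)
  fix i s assume i: "i < n" and s: "s < m i"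
  define g where "g = (\<lambda>\<tau>. nu \<tau> i s * (lam + \<tau> + 1))"
  have "g 0 \<le> g t"
  proof (rule mono_deriv[OF order.refl t, where g' = "\<lambda>\<tau>. ff i s (nu \<tau>)"])
    fix \<tau> assume \<tau>: "0 \<le> \<tau>" "\<tau> \<le> t"
    show "(g has_real_derivative ff i s (nu \<tau>)) (at \<tau> within {0..})"
      unfolding g_def
      by (rule derivative_eq_intros nu_deriv[OF \<tau>(1) i s] refl | use \<tau> lam in simp)+
  next
    fix \<tau> :: real show "0 \<le> ff i s (nu \<tau>)" using f_pos[OF i] less_imp_le by blast
  qed
  moreover have "0 \<le> g 0" using P_nonneg[OF mu0 i s] lam by (simp add: g_def nu0)
  ultimately have "0 \<le> nu t i s * (lam + t + 1)" by (simp add: g_def)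
  thus "0 \<le> nu t i s" using t lam by (simp add: zero_le_mult_iff)
next
  fix i assume i: "i < n"
  define g where "g = (\<lambda>\<tau>. ((\<Sum>s<m i. nu \<tau> i s) - 1) * (lam + \<tau> + 1))"
  have "g 0 = g t"
  proof (rule const_deriv[OF order.refl t])
    fix \<tau> assume \<tau>: "0 \<le> \<tau>" "\<tau> \<le> t"
    have ds: "((\<lambda>\<tau>. \<Sum>s<m i. nu \<tau> i s) has_real_derivative (\<Sum>s<m i. (ff i s (nu \<tau>) - nu \<tau> i s) / (lam + \<tau> + 1))) (at \<tau> within {0..})"
      by (rule DERIV_sum) (rule nu_deriv[OF \<tau>(1) i], simp)
    have dc: "((\<lambda>\<tau>. lam + \<tau> + 1) has_real_derivative 1) (at \<tau> within {0..})"
      by (auto intro!: derivative_eq_intros)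
    have "(g has_real_derivative ((\<Sum>s<m i. (ff i s (nu \<tau>) - nu \<tau> i s) / (lam + \<tau> + 1)) - 0) * (lam + \<tau> + 1) + ((\<Sum>s<m i. nu \<tau> i s) - 1) * 1) (at \<tau> within {0..})"
      unfolding g_def using DERIV_mult[OF DERIV_diff[OF ds DERIV_const[of 1]] dc] by simp
    moreover have "((\<Sum>s<m i. (ff i s (nu \<tau>) - nu \<tau> i s) / (lam + \<tau> + 1)) - 0) * (lam + \<tau> + 1) + ((\<Sum>s<m i. nu \<tau> i s) - 1) * 1 = 0"
      using \<tau> lam f_sum[OF i] by (simp add: sum_divide_distrib[symmetric] sum_subtractf)
    ultimately show "(g has_real_derivative 0) (at \<tau> within {0..})" by simp
  qed
  moreover have "g 0 = 0" using P_sum[OF mu0 i] by (simp add: g_def nu0)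
  ultimately have "((\<Sum>s<m i. nu t i s) - 1) * (lam + t + 1) = 0" by (simp add: g_def)
  thus "(\<Sum>s<m i. nu t i s) = 1" using t lam by simp
next
  fix i s assume "\<not> (i < n \<and> s < m i)"
  thus "nu t i s = 0" by (auto simp: nu_def cl_def)
qed

lemma nu_lb:
  assumes t: "0 \<le> t" and i: "i < n" and s: "s < m i"
  shows "\<mu> 0 i s * (lam + 1) + dl * t \<le> nu t i s * (lam + t + 1)"
proof -
  define g where "g = (\<lambda>\<tau>. nu \<tau> i s * (lam + \<tau> + 1) - dl * \<tau>)"
  have "g 0 \<le> g t"
  proof (rule mono_deriv[OF order.refl t, where g' = "\<lambda>\<tau>. ff i s (nu \<tau>) - dl"])
    fix \<tau> assume \<tau>: "0 \<le> \<tau>" "\<tau> \<le> t"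
    show "(g has_real_derivative ff i s (nu \<tau>) - dl) (at \<tau> within {0..})"
      unfolding g_def
      by (rule derivative_eq_intros nu_deriv[OF \<tau>(1) i s] refl | use \<tau> lam in simp)+
  next
    fix \<tau> :: real assume "0 < \<tau>" show "0 \<le> ff i s (nu \<tau>) - dl" using dl(2)[OF nu_P i s] \<open>0 < \<tau>\<close> by simp
  qed
  thus ?thesis by (simp add: g_def nu0 nu_in[OF i s])
qed

lemma V_deriv:
  assumes t: "0 \<le> t" and pos: "\<And>i s. i < n \<Longrightarrow> s < m i \<Longrightarrow> 0 < nu t i s"
  shows "((\<lambda>\<tau>. V (nu \<tau>)) has_real_derivative - (1 / (lam + t + 1)) * W (nu t)) (at t within {0..})"
proof -
  have dd: "((\<lambda>\<tau>. V (nu \<tau>)) has_real_derivative D (nu t) (\<lambda>i s. (1 / (lam + t + 1)) * (F (nu t) i s - nu t i s))) (at t within {0..})"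
  proof (rule DL)
    fix i s assume i: "i < n" and s: "s < m i"
    show "((\<lambda>\<tau>. nu \<tau> i s) has_real_derivative 1 / (lam + t + 1) * (F (nu t) i s - nu t i s)) (at t within {0..})"
      using nu_deriv[OF t i s] by (simp add: F_in[OF i s])
    show "0 < nu t i s" by (rule pos[OF i s])
  qed
  have eq: "D (nu t) (\<lambda>i s. (1 / (lam + t + 1)) * (F (nu t) i s - nu t i s)) = - (1 / (lam + t + 1)) * W (nu t)"
    by (rule AL[OF nu_P[OF t] pos])
  show ?thesis using dd unfolding eq .
qed

lemma nu_lb1:
  assumes t: "1 \<le> t" and i: "i < n" and s: "s < m i"
  shows "dl / (lam + 2) \<le> nu t i s"
proof -
  have a: "dl * t \<le> nu t i s * (lam + t + 1)"
    using nu_lb[of t i s] P_nonneg[OF mu0 i s] lam t i s by (smt (verit) mult_nonneg_nonneg)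
  have "0 \<le> (t - 1) * (lam + 1)" using t lam by simp
  hence b: "lam + t + 1 \<le> t * (lam + 2)" by (simp add: algebra_simps)
  have "dl * (lam + t + 1) \<le> dl * (t * (lam + 2))" using b dl(1) by (intro mult_left_mono) auto
  also have "\<dots> = (dl * t) * (lam + 2)" by simp
  also have "\<dots> \<le> (nu t i s * (lam + t + 1)) * (lam + 2)" using a lam by (intro mult_right_mono) auto
  finally have "dl * (lam + t + 1) \<le> (nu t i s * (lam + 2)) * (lam + t + 1)" by (simp add: algebra_simps)
  hence "dl \<le> nu t i s * (lam + 2)" using t lam by (simp add: mult_le_cancel_right)
  thus ?thesis using lam by (simp add: pos_divide_le_eq)
qed

lemma nu_pos1: "1 \<le> t \<Longrightarrow> i < n \<Longrightarrow> s < m i \<Longrightarrow> 0 < nu t i s"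
  using nu_lb1[of t i s] dl(1) lam by (smt (verit) divide_pos_pos)

lemma conv:
  assumes x: "x \<in> P" "\<And>i s. i < n \<Longrightarrow> s < m i \<Longrightarrow> x i s = ff i s x"
    and i: "i < n" and s: "s < m i"
  shows "((\<lambda>t. \<mu> t i s) \<longlongrightarrow> x i s) at_top"
proof -
  define \<psi> where "\<psi> = (\<lambda>\<tau>. V (nu \<tau>) * (lam + \<tau> + 1) powr dl)"
  define \<rho> where "\<rho> = dl / (lam + 2)"
  have \<rho>: "0 < \<rho>" "\<rho> \<le> dl" using dl(1) lam by (auto simp: \<rho>_def field_simps)
  have psi_le: "\<psi> t \<le> \<psi> 1" if t: "1 \<le> t" for t
  proof -
    have "- \<psi> 1 \<le> - \<psi> t"
    proof (rule mono_deriv[OF _ t, where g' = "\<lambda>\<tau>. - ((- (1 / (lam + \<tau> + 1)) * W (nu \<tau>)) * (lam + \<tau> + 1) powr dl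
        + (dl * (lam + \<tau> + 1) powr (dl - of_nat 1) * 1) * V (nu \<tau>))"])
      fix \<tau> assume \<tau>: "1 \<le> \<tau>" "\<tau> \<le> t"
      have dV: "((\<lambda>\<tau>. V (nu \<tau>)) has_real_derivative - (1 / (lam + \<tau> + 1)) * W (nu \<tau>)) (at \<tau> within {0..})"
        using \<tau> by (intro V_deriv) (auto intro: nu_pos1)
      have dc: "DERIV (\<lambda>\<tau>. lam + \<tau> + 1) \<tau> :> 1" by (auto intro!: derivative_eq_intros)
      have dp: "((\<lambda>\<tau>. (lam + \<tau> + 1) powr dl) has_real_derivative dl * (lam + \<tau> + 1) powr (dl - of_nat 1) * 1) (at \<tau> within {0..})"
        by (rule has_field_derivative_at_within) (use DERIV_fun_powr[OF dc, of dl] \<tau> lam in auto)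
      show "((\<lambda>\<tau>. - \<psi> \<tau>) has_real_derivative - ((- (1 / (lam + \<tau> + 1)) * W (nu \<tau>)) * (lam + \<tau> + 1) powr dl
        + (dl * (lam + \<tau> + 1) powr (dl - of_nat 1) * 1) * V (nu \<tau>))) (at \<tau> within {0..})"
        unfolding \<psi>_def by (rule DERIV_minus, rule DERIV_mult[OF dV dp])
    next
      fix \<tau> assume \<tau>: "1 < \<tau>" "\<tau> < t"
      define c where "c = lam + \<tau> + 1"
      have c: "0 < c" using \<tau> lam by (simp add: c_def)
      have nP: "nu \<tau> \<in> P" using \<tau> by (intro nu_P) auto
      have pos: "\<And>i s. i < n \<Longrightarrow> s < m i \<Longrightarrow> 0 < nu \<tau> i s" using \<tau> by (intro nu_pos1) auto
      have "V (nu \<tau>) \<le> H (nu \<tau>) / dl"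
        by (rule V_le_H[OF nP dl(1)]) (rule dl(2)[OF nP])
      hence "dl * V (nu \<tau>) \<le> H (nu \<tau>)" using dl(1) by (simp add: field_simps)
      also have "\<dots> \<le> W (nu \<tau>)" by (rule W_ge_H[OF nP pos])
      finally have VW: "dl * V (nu \<tau>) - W (nu \<tau>) \<le> 0" by simp
      have pw: "c powr (dl - of_nat 1) = c powr dl / c" using c by (simp add: powr_diff)
      have "(- (1 / c) * W (nu \<tau>)) * c powr dl + (dl * c powr (dl - of_nat 1) * 1) * V (nu \<tau>)
          = (c powr dl / c) * (dl * V (nu \<tau>) - W (nu \<tau>))"
        unfolding pw using c by (simp add: field_simps)
      also have "\<dots> \<le> 0" using c VW by (intro mult_nonneg_nonpos) auto
      finally show "0 \<le> - ((- (1 / (lam + \<tau> + 1)) * W (nu \<tau>)) * (lam + \<tau> + 1) powr dl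
        + (dl * (lam + \<tau> + 1) powr (dl - of_nat 1) * 1) * V (nu \<tau>))" by (simp add: c_def)
    qed simp
    thus ?thesis by simp
  qed
  define K where "K = 4 * \<psi> 1 / (\<rho>^2 * \<omega> i)"
  have wi: "0 < \<omega> i" using wpos i by simp
  have bound: "(nu t i s - x i s)^2 \<le> K * (lam + t + 1) powr (- dl)" if t: "1 \<le> t" for t
  proof -
    have nP: "nu t \<in> P" using t by (intro nu_P) auto
    have c: "0 < lam + t + 1" using t lam by simp
    have "\<omega> i * (nu t i s - x i s)^2 \<le> Q (nu t) x" by (rule Q_coord[OF i s])
    also have "\<dots> \<le> H (nu t) / \<rho>^2"
    proof (rule KI[OF nP x \<rho>(1)])
      fix i s assume "i < n" "s < m i"
      thus "\<rho> \<le> nu t i s" using nu_lb1[OF t] by (simp add: \<rho>_def)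
      show "\<rho> \<le> ff i s (nu t)" using dl(2)[OF nP \<open>i < n\<close> \<open>s < m i\<close>] \<rho>(2) by simp
    qed
    also have "\<dots> \<le> 4 * V (nu t) / \<rho>^2" using V_ge_H[OF nP] \<rho>(1) by (intro divide_right_mono) auto
    also have "V (nu t) = \<psi> t * (lam + t + 1) powr (- dl)"
      using c by (simp add: \<psi>_def powr_minus field_simps)
    also have "4 * (\<psi> t * (lam + t + 1) powr (- dl)) / \<rho>^2 \<le> 4 * (\<psi> 1 * (lam + t + 1) powr (- dl)) / \<rho>^2"
      using psi_le[OF t] \<rho>(1) by (intro divide_right_mono mult_left_mono mult_right_mono) auto
    finally have "\<omega> i * (nu t i s - x i s)^2 \<le> 4 * (\<psi> 1 * (lam + t + 1) powr (- dl)) / \<rho>^2" .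
    thus ?thesis using wi \<rho>(1) by (simp add: K_def field_simps)
  qed
  have lim_c: "filterlim (\<lambda>t. lam + t + 1) at_top at_top"
  proof -
    have "(\<lambda>t::real. lam + t + 1) = (\<lambda>t. (lam + 1) + t)" by (auto simp: fun_eq_iff)
    thus ?thesis using filterlim_tendsto_add_at_top[OF tendsto_const filterlim_ident] by simp
  qed
  have t0: "((\<lambda>t. (lam + t + 1) powr (- dl)) \<longlongrightarrow> 0) at_top"
    by (rule tendsto_neg_powr) (use dl(1) lim_c in auto)
  have tK: "((\<lambda>t. K * (lam + t + 1) powr (- dl)) \<longlongrightarrow> 0) at_top"
    using tendsto_mult[OF tendsto_const t0, of K] by simp
  have ev1: "eventually (\<lambda>t. 0 \<le> (nu t i s - x i s)^2) at_top" by simp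
  have ev2: "eventually (\<lambda>t. (nu t i s - x i s)^2 \<le> K * (lam + t + 1) powr (- dl)) at_top"
    unfolding eventually_at_top_linorder by (rule exI[of _ 1]) (auto intro: bound)
  have sq: "((\<lambda>t. (nu t i s - x i s)^2) \<longlongrightarrow> 0) at_top"
    by (rule tendsto_sandwich[OF ev1 ev2 tendsto_const tK])
  have "((\<lambda>t. sqrt ((nu t i s - x i s)^2)) \<longlongrightarrow> sqrt 0) at_top" by (intro tendsto_real_sqrt sq)
  hence "((\<lambda>t. \<bar>nu t i s - x i s\<bar>) \<longlongrightarrow> 0) at_top" by simp
  hence "((\<lambda>t. nu t i s - x i s) \<longlongrightarrow> 0) at_top" by (simp add: tendsto_rabs_zero_iff)
  hence "((\<lambda>t. nu t i s) \<longlongrightarrow> x i s) at_top" by (simp add: LIM_zero_iff)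
  thus ?thesis using i s by (simp add: nu_in)
qed


lemma H_nonneg: "0 \<le> H y"
  unfolding H_def by (auto intro!: sum_nonneg mult_nonneg_nonneg wnn)

lemma stab:
  assumes x: "x \<in> P" "\<And>i s. i < n \<Longrightarrow> s < m i \<Longrightarrow> x i s = ff i s x"
    and lb: "\<And>i s. i < n \<Longrightarrow> s < m i \<Longrightarrow> dl / 2 \<le> \<mu> 0 i s"
    and t: "0 \<le> t"
  shows "Q (nu t) x \<le> 4 * H (\<mu> 0) / (dl * (dl / 2)^2)"
proof -
  have nlb: "dl / 2 \<le> nu \<tau> i s" if \<tau>: "0 \<le> \<tau>" and i: "i < n" and s: "s < m i" for \<tau> i s
  proof -
    have a1: "(dl / 2) * (lam + 1) \<le> \<mu> 0 i s * (lam + 1)"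
      using lb[OF i s] lam by (intro mult_right_mono) auto
    have a2: "(dl / 2) * \<tau> \<le> dl * \<tau>" using dl(1) \<tau> by (intro mult_right_mono) auto
    have a3: "(dl / 2) * (lam + \<tau> + 1) = (dl / 2) * (lam + 1) + (dl / 2) * \<tau>" by (simp add: algebra_simps)
    have "(dl / 2) * (lam + \<tau> + 1) \<le> \<mu> 0 i s * (lam + 1) + dl * \<tau>"
      using a1 a2 a3 by linarith
    also have "\<dots> \<le> nu \<tau> i s * (lam + \<tau> + 1)" by (rule nu_lb[OF \<tau> i s])
    finally show ?thesis using \<tau> lam by (simp add: mult_le_cancel_right)
  qed
  have pos: "0 < nu \<tau> i s" if "0 \<le> \<tau>" "i < n" "s < m i" for \<tau> i s
    using nlb[OF that] dl(1) by linarith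
  have "- V (nu 0) \<le> - V (nu t)"
  proof (rule mono_deriv[OF order.refl t, where g' = "\<lambda>\<tau>. - (- (1 / (lam + \<tau> + 1)) * W (nu \<tau>))"])
    fix \<tau> assume \<tau>: "0 \<le> \<tau>" "\<tau> \<le> t"
    show "((\<lambda>\<tau>. - V (nu \<tau>)) has_real_derivative - (- (1 / (lam + \<tau> + 1)) * W (nu \<tau>))) (at \<tau> within {0..})"
      by (rule DERIV_minus, rule V_deriv[OF \<tau>(1)]) (rule pos[OF \<tau>(1)])
  next
    fix \<tau> :: real assume \<tau>: "0 < \<tau>" "\<tau> < t"
    have "0 \<le> W (nu \<tau>)" using W_ge_H[OF nu_P pos] H_nonneg[of "nu \<tau>"] \<tau> by (meson less_imp_le order.trans)
    thus "0 \<le> - (- (1 / (lam + \<tau> + 1)) * W (nu \<tau>))" using \<tau> lam by simp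
  qed
  hence V1: "V (nu t) \<le> V (\<mu> 0)" by (simp add: nu0)
  have V2: "V (\<mu> 0) \<le> H (\<mu> 0) / dl" by (rule V_le_H[OF mu0 dl(1)]) (rule dl(2)[OF mu0])
  have nP: "nu t \<in> P" by (rule nu_P[OF t])
  have "Q (nu t) x \<le> H (nu t) / (dl / 2)^2"
  proof (rule KI[OF nP x])
    show "0 < dl / 2" using dl(1) by simp
    fix i s assume "i < n" "s < m i"
    thus "dl / 2 \<le> nu t i s" by (rule nlb[OF t])
    show "dl / 2 \<le> ff i s (nu t)" using dl(2)[OF nP \<open>i < n\<close> \<open>s < m i\<close>] dl(1) by simp
  qed
  also have "\<dots> \<le> 4 * V (nu t) / (dl / 2)^2" using V_ge_H[OF nP] by (intro divide_right_mono) auto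
  also have "\<dots> \<le> 4 * (H (\<mu> 0) / dl) / (dl / 2)^2" using V1 V2 by (intro divide_right_mono) auto
  finally show ?thesis by simp
qed


end

context qg begin

end

theorem theorem3:
  fixes n :: nat and m :: "nat \<Rightarrow> nat" and E :: "nat \<Rightarrow> nat \<Rightarrow> bool"
    and A :: "nat \<Rightarrow> nat \<Rightarrow> nat \<Rightarrow> nat \<Rightarrow> real" and \<beta> lam :: real
  assumes "network_graph E"
    and "\<forall>i<n. 1 \<le> m i"
    and "competitive n m E A"
    and "0 < \<beta>" and "0 \<le> lam"
  shows "\<exists>x. is_QRE n m E A \<beta> x
           \<and> (\<forall>y. is_QRE n m E A \<beta> y \<longrightarrow> y = x)
           \<and> (\<forall>\<mu>. belief_solution n m E A \<beta> lam \<mu> \<and> \<mu> 0 \<in> simplex_prod n m \<longrightarrow>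
                (\<forall>i<n. \<forall>s<m i. ((\<lambda>t. \<mu> t i s) \<longlongrightarrow> x i s) at_top))
           \<and> (\<forall>\<epsilon>>0. \<exists>\<delta>>0. \<forall>\<mu>. belief_solution n m E A \<beta> lam \<mu> \<and> \<mu> 0 \<in> simplex_prod n m
                \<and> state_dist n m (\<mu> 0) x < \<delta> \<longrightarrow> (\<forall>t\<ge>0. state_dist n m (\<mu> t) x < \<epsilon>))"
proof -
  obtain \<omega> where w: "\<forall>i<n. 0 < \<omega> i" "\<forall>x\<in>simplex_prod n m. (\<Sum>i<n. \<omega> i * payoff n m E A i x) = 0"
    using assms(3) unfolding competitive_def by blast
  interpret qg n m E A \<beta> \<omega> using assms w by unfold_locales auto
  obtain x where x: "x \<in> P" "\<And>i s. i < n \<Longrightarrow> s < m i \<Longrightarrow> x i s = ff i s x"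
    using QRE_exists by blast
  have xq: "is_QRE n m E A \<beta> x" using x by (simp add: is_QRE_def)
  have uniq: "\<forall>y. is_QRE n m E A \<beta> y \<longrightarrow> y = x"
    using QRE_unique[OF _ _ x] by (auto simp: is_QRE_def)
  have cv: "\<forall>\<mu>. belief_solution n m E A \<beta> lam \<mu> \<and> \<mu> 0 \<in> simplex_prod n m \<longrightarrow>
                (\<forall>i<n. \<forall>s<m i. ((\<lambda>t. \<mu> t i s) \<longlongrightarrow> x i s) at_top)"
  proof (intro allI impI)
    fix \<mu> i s assume h: "belief_solution n m E A \<beta> lam \<mu> \<and> \<mu> 0 \<in> simplex_prod n m" and i: "i < n" and s: "s < m i"
    interpret T: qtraj n m E A \<beta> \<omega> lam \<mu> using assms w h by unfold_locales auto
    show "((\<lambda>t. \<mu> t i s) \<longlongrightarrow> x i s) at_top" by (rule T.conv[OF x i s])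
  qed
  have st: "\<forall>\<epsilon>>0. \<exists>\<delta>>0. \<forall>\<mu>. belief_solution n m E A \<beta> lam \<mu> \<and> \<mu> 0 \<in> simplex_prod n m
                \<and> state_dist n m (\<mu> 0) x < \<delta> \<longrightarrow> (\<forall>t\<ge>0. state_dist n m (\<mu> t) x < \<epsilon>)"
  proof (intro allI impI)
    fix \<epsilon> :: real assume \<epsilon>: "0 < \<epsilon>"
    define N where "N = (\<Sum>i<n. real (m i))"
    define wm where "wm = Min (insert 1 (\<omega> ` {..<n}))"
    have wm: "0 < wm" using w(1) by (auto simp: wm_def)
    have wmle: "wm \<le> \<omega> i" if "i < n" for i using that by (auto simp: wm_def)
    have N: "0 \<le> N" by (simp add: N_def sum_nonneg)
    define e where "e = \<epsilon> / (N + 1)"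
    have e: "0 < e" using \<epsilon> N by (simp add: e_def)
    have eN: "e * N < \<epsilon>" using \<epsilon> N by (simp add: e_def field_simps)
    define \<eta> where "\<eta> = e^2 * wm * dl * (dl / 2)^2 / 4"
    have \<eta>: "0 < \<eta>" using e wm dl(1) by (simp add: \<eta>_def)
    have H0: "H x = 0" unfolding H_def using x(2) by (intro sum.neutral) simp
    obtain d1 where d1: "0 < d1" "\<And>y. y \<in> P \<Longrightarrow> state_dist n m y x < d1 \<Longrightarrow> H y < \<eta>"
      using H_cont_sd[OF x(1) \<eta>] H0 by auto
    show "\<exists>\<delta>>0. \<forall>\<mu>. belief_solution n m E A \<beta> lam \<mu> \<and> \<mu> 0 \<in> simplex_prod n m
                \<and> state_dist n m (\<mu> 0) x < \<delta> \<longrightarrow> (\<forall>t\<ge>0. state_dist n m (\<mu> t) x < \<epsilon>)"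
    proof (intro exI[of _ "min d1 (dl / 2)"] conjI allI impI)
      show "0 < min d1 (dl / 2)" using d1(1) dl(1) by simp
      fix \<mu> and t :: real assume h: "belief_solution n m E A \<beta> lam \<mu> \<and> \<mu> 0 \<in> simplex_prod n m
                \<and> state_dist n m (\<mu> 0) x < min d1 (dl / 2)" and t: "0 \<le> t"
      interpret T: qtraj n m E A \<beta> \<omega> lam \<mu> using assms w h by unfold_locales auto
      have m0: "\<mu> 0 \<in> P" using h by simp
      have lb: "dl / 2 \<le> \<mu> 0 i s" if "i < n" "s < m i" for i s
      proof -
        have "\<bar>\<mu> 0 i s - x i s\<bar> < dl / 2" using coord_le_sd[OF that, of "\<mu> 0" x] h by simp
        moreover have "dl \<le> x i s" using dl(2)[OF x(1) that] x(2)[OF that] by simp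
        ultimately show ?thesis by linarith
      qed
      have Hm: "H (\<mu> 0) < \<eta>" using d1(2)[OF m0] h by simp
      have "Q (T.nu t) x \<le> 4 * H (\<mu> 0) / (dl * (dl / 2)^2)" by (rule T.stab[OF x lb t])
      also have "\<dots> < 4 * \<eta> / (dl * (dl / 2)^2)" using Hm dl(1) by (intro divide_strict_right_mono) auto
      also have "\<dots> = e^2 * wm" using dl(1) by (simp add: \<eta>_def field_simps)
      finally have Qb: "Q (T.nu t) x < e^2 * wm" .
      have cb: "\<bar>\<mu> t i s - x i s\<bar> \<le> e" if i: "i < n" and s: "s < m i" for i s
      proof -
        have "\<omega> i * (T.nu t i s - x i s)^2 < e^2 * \<omega> i"
          using Q_coord[OF i s, of "T.nu t" x] Qb mult_left_mono[OF wmle[OF i], of "e^2"] by simp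
        hence "(T.nu t i s - x i s)^2 < e^2" using wpos[OF i] by simp
        hence d2: "\<bar>T.nu t i s - x i s\<bar>^2 < e^2" by simp
        have "\<bar>T.nu t i s - x i s\<bar> < e" using power_less_imp_less_base[OF d2] e by simp
        thus ?thesis by (simp add: T.nu_in[OF i s])
      qed
      have "state_dist n m (\<mu> t) x \<le> (\<Sum>i<n. \<Sum>s<m i. e)"
        unfolding state_dist_def by (intro sum_mono cb) auto
      also have "\<dots> = e * N" by (simp add: N_def sum_distrib_left mult.commute)
      finally show "state_dist n m (\<mu> t) x < \<epsilon>" using eN by simp
    qed
  qed
  show ?thesis using xq uniq cv st by blast
qed

end
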